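(* Let $\mu,\nu$ be locally finite Borel measures on $\mathbb C$, $\gamma>0$, $x,z\in\mathbb C$, $r>0$, $s\in(0,r]$, with $B(z,s)\subset B(x,3r)$, $x\in\operatorname{supp}\nu$, and $\alpha_{\mu,\nu}(B(x,r))\le\gamma\,\delta_\mu(B(x,r))$. Then: (1) if $\gamma<\frac19(s/r)^2$, then $\delta_\mu(B(z,s))\le 3D_\nu\big(1+8\sqrt\gamma\,\tfrac rs\big)\delta_\mu(B(x,r))$, and if moreover $\nu$ is a line measure, $\delta_\mu(B(z,s))\le\big(1+8\sqrt\gamma\,\tfrac rs\big)\delta_\mu(B(x,r))$; (2) if $\gamma<\frac{1}{9D_\nu}(s/r)^2$ and $z\in\operatorname{supp}\nu$, then $\delta_\mu(B(z,s))\ge D_\nu^{-1}\big(1-8\sqrt{D_\nu\gamma}\,\tfrac rs\big)\delta_\mu(B(x,r))$.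
   Context: $B(z,r)$ is the open disc; $\delta_\mu(B(z,r))=\mu(B(z,r))/(2r)$. Fix a Lipschitz $\varphi:[0,\infty)\to\mathbb R$ with $\varphi\equiv1$ on $[0,3)$, Lipschitz constant $1$, support in $[0,4)$. $\mathcal F_{z,r}$ = Lipschitz $f:\mathbb C\to\mathbb R$ with compact support in $B(z,4r)$ and Lipschitz constant $\le1/r$. $\alpha_{\mu,\nu}(B(z,r))=\sup_{f\in\mathcal F_{z,r}}|\frac1r\int\varphi(\frac{|w-z|}{r})f(w)\,d(\mu-c_{\mu,\nu}\nu)(w)|$, with $c_{\mu,\nu}=\int\varphi(|\cdot-z|/r)d\mu/\int\varphi(|\cdot-z|/r)d\nu$ if the denominator is nonzero and $0$ otherwise. Density ratio: $D_\nu=\sup\{\delta_\nu(B(x,r))/\delta_\nu(B(z,s)): r,s>0,\ x,z\in\operatorname{supp}\nu\}$ (statements are trivial if $D_\nu=\infty$). A line measure is $c\mathcal H^1|_L$, $c>0$, $L$ a line. *)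

theory Defs
  imports "HOL-Analysis.Analysis"
begin

definition loc_finite_borel :: "complex measure \<Rightarrow> bool" where
  "loc_finite_borel \<mu> \<longleftrightarrow> sets \<mu> = sets borel \<and>
     (\<forall>x. \<exists>e>0. emeasure \<mu> (ball x e) < \<infinity>)"

definition msupp :: "complex measure \<Rightarrow> complex set" where
  "msupp \<nu> = {x. \<forall>e>0. emeasure \<nu> (ball x e) > 0}"

definition dens :: "complex measure \<Rightarrow> complex \<Rightarrow> real \<Rightarrow> real" where
  "dens \<mu> z r = measure \<mu> (ball z r) / (2 * r)"

definition cutoff :: "(real \<Rightarrow> real) \<Rightarrow> bool" where
  "cutoff \<phi> \<longleftrightarrow> 1-lipschitz_on {0..} \<phi> \<and> (\<forall>t\<in>{0..<3}. \<phi> t = 1) \<and> (\<forall>t\<ge>4. \<phi> t = 0)"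

definition testF :: "complex \<Rightarrow> real \<Rightarrow> (complex \<Rightarrow> real) set" where
  "testF z r = {f. (1/r)-lipschitz_on UNIV f \<and> compact (closure {w. f w \<noteq> 0})
      \<and> closure {w. f w \<noteq> 0} \<subseteq> ball z (4*r)}"

definition cconst :: "(real \<Rightarrow> real) \<Rightarrow> complex measure \<Rightarrow> complex measure \<Rightarrow> complex \<Rightarrow> real \<Rightarrow> real" where
  "cconst \<phi> \<mu> \<nu> z r =
     (let d = integral\<^sup>L \<nu> (\<lambda>w. \<phi> (cmod (w - z) / r)) in
      if d \<noteq> 0 then integral\<^sup>L \<mu> (\<lambda>w. \<phi> (cmod (w - z) / r)) / d else 0)"

text \<open>alpha_{mu,nu}(B(z,r)); the integral against the signed measure mu - c nu is
  written as the difference of the two integrals.\<close>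
definition alpha :: "(real \<Rightarrow> real) \<Rightarrow> complex measure \<Rightarrow> complex measure \<Rightarrow> complex \<Rightarrow> real \<Rightarrow> real" where
  "alpha \<phi> \<mu> \<nu> z r = (SUP f \<in> testF z r.
     \<bar>(1/r) * (integral\<^sup>L \<mu> (\<lambda>w. \<phi> (cmod (w - z) / r) * f w)
        - cconst \<phi> \<mu> \<nu> z r * integral\<^sup>L \<nu> (\<lambda>w. \<phi> (cmod (w - z) / r) * f w))\<bar>)"

definition Dratio :: "complex measure \<Rightarrow> ereal" where
  "Dratio \<nu> = (SUP p \<in> {(x, r, z, s). r > 0 \<and> s > 0 \<and> x \<in> msupp \<nu> \<and> z \<in> msupp \<nu>}.
      (case p of (x, r, z, s) \<Rightarrow> ereal (dens \<nu> x r / dens \<nu> z s)))"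

text \<open>Line measures c H^1 restricted to a line L = {a + t u}, |u| = 1; H^1|_L is the
  image of Lebesgue measure on the real line under the isometry t |-> a + t u.\<close>
definition line_measure :: "complex measure \<Rightarrow> bool" where
  "line_measure \<nu> \<longleftrightarrow> (\<exists>c>0. \<exists>a u. cmod u = 1 \<and>
      \<nu> = scale_measure (ennreal c) (distr lborel borel (\<lambda>t. a + of_real t * u)))"

end

theory Submission
  imports Defs
begin

lemma lfb_sets: "loc_finite_borel \<mu> \<Longrightarrow> sets \<mu> = sets borel"
  by (simp add: loc_finite_borel_def)

lemma lfb_ball_fin:
  assumes "loc_finite_borel \<mu>"
  shows "emeasure \<mu> (ball w \<rho>) < \<infinity>"
proof -
  let ?T = "{ball y e | y e. e > 0 \<and> emeasure \<mu> (ball y e) < \<infinity>}"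
  have cov: "cball w \<rho> \<subseteq> \<Union>?T"
  proof
    fix v assume "v \<in> cball w \<rho>"
    obtain e where "e > 0" "emeasure \<mu> (ball v e) < \<infinity>"
      using assms unfolding loc_finite_borel_def by blast
    then show "v \<in> \<Union>?T" by (auto intro!: exI[of _ "ball v e"])
  qed
  obtain T' where T': "T' \<subseteq> ?T" "finite T'" "cball w \<rho> \<subseteq> \<Union>T'"
    using compactE[OF compact_cball cov] by blast
  have sets: "T' \<subseteq> sets \<mu>" using T'(1) lfb_sets[OF assms] by auto
  have "emeasure \<mu> (ball w \<rho>) \<le> emeasure \<mu> (\<Union>T')"
    apply (rule emeasure_mono)
    using T'(3) ball_subset_cball apply blast
    using sets T'(2) by blast
  also have "\<dots> \<le> (\<Sum>B\<in>T'. emeasure \<mu> B)"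
    using emeasure_subadditive_finite[of T' id \<mu>] T'(2) sets by auto
  also have "\<dots> < \<infinity>"
    using ennreal_sum_less_top[OF T'(2), of "emeasure \<mu>"] T'(1) by force
  finally show ?thesis .
qed

lemma lfb_space: "loc_finite_borel \<mu> \<Longrightarrow> space \<mu> = UNIV"
  using sets_eq_imp_space_eq[OF lfb_sets] by auto

lemma lfb_meas:
  assumes "loc_finite_borel \<mu>" "continuous_on UNIV f"
  shows "(f :: complex \<Rightarrow> real) \<in> borel_measurable \<mu>"
proof -
  have "f \<in> borel_measurable borel" using assms(2) by (rule borel_measurable_continuous_onI)
  then show ?thesis using measurable_cong_sets[OF lfb_sets[OF assms(1)], of borel borel] by blast
qed

lemma lfb_integrable:
  assumes "loc_finite_borel \<mu>" "continuous_on UNIV f"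
    and "\<And>v. \<bar>f v\<bar> \<le> B" and "\<And>v. v \<notin> ball y \<rho> \<Longrightarrow> f v = 0"
  shows "integrable \<mu> (f :: complex \<Rightarrow> real)"
proof (rule integrableI_bounded_set[where A="ball y \<rho>" and B=B])
  show "ball y \<rho> \<in> sets \<mu>" using lfb_sets[OF assms(1)] by simp
  show "f \<in> borel_measurable \<mu>" using lfb_meas[OF assms(1,2)] .
  show "emeasure \<mu> (ball y \<rho>) < \<infinity>" using lfb_ball_fin[OF assms(1)] .
qed (use assms in auto)

lemma lfb_ind_integrable:
  assumes "loc_finite_borel \<mu>"
  shows "integrable \<mu> (indicator (ball y \<rho>) :: complex \<Rightarrow> real)"
  using lfb_sets[OF assms] lfb_ball_fin[OF assms] by (intro integrable_real_indicator) auto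

lemma lfb_int_ind:
  assumes "loc_finite_borel \<mu>"
  shows "integral\<^sup>L \<mu> (indicator (ball y \<rho>) :: complex \<Rightarrow> real) = measure \<mu> (ball y \<rho>)"
  using lfb_space[OF assms] by simp

lemma lfb_int_le:
  assumes "loc_finite_borel \<mu>" "integrable \<mu> f" "\<And>v. f v \<le> indicator (ball y \<rho>) v"
  shows "integral\<^sup>L \<mu> (f :: complex \<Rightarrow> real) \<le> measure \<mu> (ball y \<rho>)"
  using integral_mono[OF assms(2) lfb_ind_integrable[OF assms(1)] assms(3)] lfb_int_ind[OF assms(1)]
  by simp

lemma lfb_int_ge:
  assumes "loc_finite_borel \<mu>" "integrable \<mu> f" "\<And>v. indicator (ball y \<rho>) v \<le> f v"
  shows "measure \<mu> (ball y \<rho>) \<le> integral\<^sup>L \<mu> (f :: complex \<Rightarrow> real)"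
  using integral_mono[OF lfb_ind_integrable[OF assms(1)] assms(2) assms(3)] lfb_int_ind[OF assms(1)]
  by simp

lemma lfb_int_abs:
  assumes "loc_finite_borel \<mu>" "integrable \<mu> f" "\<And>v. \<bar>f v\<bar> \<le> B * indicator (ball y \<rho>) v"
  shows "\<bar>integral\<^sup>L \<mu> (f :: complex \<Rightarrow> real)\<bar> \<le> B * measure \<mu> (ball y \<rho>)"
proof -
  have "\<bar>integral\<^sup>L \<mu> f\<bar> \<le> integral\<^sup>L \<mu> (\<lambda>v. \<bar>f v\<bar>)" by (rule integral_abs_bound)
  also have "\<dots> \<le> integral\<^sup>L \<mu> (\<lambda>v. B * indicator (ball y \<rho>) v)"
    using assms lfb_ind_integrable[OF assms(1)] by (intro integral_mono) auto
  also have "\<dots> = B * measure \<mu> (ball y \<rho>)" using lfb_int_ind[OF assms(1)] by simp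
  finally show ?thesis .
qed

lemma cutoff_range:
  assumes "cutoff \<phi>" "t \<ge> 0"
  shows "0 \<le> \<phi> t \<and> \<phi> t \<le> 1"
proof -
  have L: "1-lipschitz_on {0..} \<phi>" and one: "\<And>t. t\<in>{0..<3} \<Longrightarrow> \<phi> t = 1"
    and zero: "\<And>t. t \<ge> 4 \<Longrightarrow> \<phi> t = 0" using assms(1) unfolding cutoff_def by auto
  consider "t < 3" | "t \<ge> 4" | "3 \<le> t" "t < 4" by linarith
  then show ?thesis
  proof cases
    case 3
    have a: "dist (\<phi> t) (\<phi> (t - 1)) \<le> 1 * dist t (t - 1)"
      by (rule lipschitz_onD[OF L]) (use 3 in auto)
    have b: "dist (\<phi> t) (\<phi> 4) \<le> 1 * dist t 4"
      by (rule lipschitz_onD[OF L]) (use 3 in auto)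
    have "\<phi> (t - 1) = 1" using one 3 by auto
    moreover have "\<phi> 4 = 0" using zero by auto
    ultimately show ?thesis using a b 3 by (auto simp: dist_real_def)
  qed (use one zero assms(2) in auto)
qed

lemma cutoff_cont:
  assumes "cutoff \<phi>" "r > 0"
  shows "continuous_on UNIV (\<lambda>v::complex. \<phi> (cmod (v - x) / r))"
proof -
  have "continuous_on {0..} \<phi>"
    using assms unfolding cutoff_def by (auto intro: lipschitz_on_continuous_on)
  moreover have "continuous_on UNIV (\<lambda>v::complex. cmod (v - x) / r)"
    using assms(2) by (intro continuous_intros) auto
  ultimately show ?thesis
    by (rule continuous_on_compose2) (use assms(2) in auto)
qed

definition bump :: "complex \<Rightarrow> real \<Rightarrow> real \<Rightarrow> complex \<Rightarrow> real" where
  "bump w a b = (\<lambda>v. min 1 (max 0 ((b - cmod (v - w)) / (b - a))))"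

lemma bump_range: "0 \<le> bump w a b v \<and> bump w a b v \<le> 1"
  unfolding bump_def by auto

lemma bump_one: "a < b \<Longrightarrow> cmod (v - w) \<le> a \<Longrightarrow> bump w a b v = 1"
  unfolding bump_def by (auto simp: field_simps)

lemma bump_zero: "a < b \<Longrightarrow> cmod (v - w) \<ge> b \<Longrightarrow> bump w a b v = 0"
  unfolding bump_def by (auto simp: field_simps divide_le_0_iff)

lemma bump_lip:
  assumes "a < b"
  shows "(1 / (b - a))-lipschitz_on UNIV (bump w a b)"
proof (rule lipschitz_onI)
  fix v1 v2 :: complex
  have mm: "\<bar>min 1 (max 0 p) - min 1 (max 0 q)\<bar> \<le> \<bar>p - q\<bar>" for p q :: real
    by (auto simp: min_def max_def)
  have "dist (bump w a b v1) (bump w a b v2)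
      \<le> \<bar>(b - cmod (v1 - w)) / (b - a) - (b - cmod (v2 - w)) / (b - a)\<bar>"
    unfolding bump_def dist_real_def by (rule mm)
  also have "\<dots> = \<bar>cmod (v2 - w) - cmod (v1 - w)\<bar> / (b - a)"
    using assms by (simp add: diff_divide_distrib[symmetric] abs_divide)
  also have "\<dots> \<le> cmod (v1 - v2) / (b - a)"
  proof -
    have "\<bar>cmod (v2 - w) - cmod (v1 - w)\<bar> \<le> cmod ((v2 - w) - (v1 - w))"
      by (rule norm_triangle_ineq3)
    also have "\<dots> = cmod (v1 - v2)" by (simp add: norm_minus_commute)
    finally show ?thesis using assms by (simp add: divide_right_mono)
  qed
  finally show "dist (bump w a b v1) (bump w a b v2) \<le> 1 / (b - a) * dist v1 v2"
    by (simp add: dist_norm)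
qed (use assms in auto)

lemma bump_cont: "a < b \<Longrightarrow> continuous_on UNIV (bump w a b)"
  using bump_lip lipschitz_on_continuous_on by blast

lemma testF_zero:
  assumes "f \<in> testF x r" "v \<notin> ball x (4 * r)"
  shows "f v = 0"
proof (rule ccontr)
  assume "f v \<noteq> 0"
  then have "v \<in> closure {w. f w \<noteq> 0}" by (meson closure_subset mem_Collect_eq subsetD)
  moreover have "closure {w. f w \<noteq> 0} \<subseteq> ball x (4 * r)" using assms(1) unfolding testF_def mem_Collect_eq by (elim conjE)
  ultimately have "v \<in> ball x (4 * r)" by (rule subsetD[rotated])
  then show False using assms(2) by (rule notE[rotated])
qed

lemma testF_bound:
  assumes "f \<in> testF x r" "r > 0"
  shows "\<bar>f v\<bar> \<le> 8 * indicator (ball x (4 * r)) v"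
proof (cases "v \<in> ball x (4 * r)")
  case True
  let ?w = "x + of_real (4 * r)"
  have L: "(1/r)-lipschitz_on UNIV f" using assms(1) unfolding testF_def mem_Collect_eq by (elim conjE)
  have "?w \<notin> ball x (4 * r)" using assms(2) by (simp add: dist_norm)
  then have fw: "f ?w = 0" by (rule testF_zero[OF assms(1)])
  have d: "dist (f v) (f ?w) \<le> 1 / r * dist v ?w" by (rule lipschitz_onD[OF L]) auto
  have "dist v ?w \<le> dist v x + dist x ?w" by (rule dist_triangle)
  also have "dist x ?w = 4 * r" using assms(2) by (simp add: dist_norm)
  finally have e: "dist v ?w \<le> dist v x + 4 * r" .
  have "1/r * dist v ?w \<le> 1/r * (dist v x + 4 * r)" by (rule mult_left_mono[OF e]) (use assms(2) in simp)
  then have "\<bar>f v\<bar> \<le> 1 / r * (dist v x + 4 * r)" using d fw by (simp add: dist_real_def)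
  then have "r * \<bar>f v\<bar> \<le> r * (1 / r * (dist v x + 4 * r))" by (rule mult_left_mono) (use assms(2) in simp)
  then have "r * \<bar>f v\<bar> \<le> dist v x + 4 * r" using assms(2) by simp
  moreover have "dist v x < 4 * r" using True by (simp add: dist_commute)
  ultimately have "r * \<bar>f v\<bar> \<le> r * 8" by linarith
  then have "\<bar>f v\<bar> \<le> 8" using assms(2) by (simp add: mult_le_cancel_left_pos)
  then show ?thesis using True by simp
qed (use testF_zero[OF assms(1)] in auto)

lemma testF_cont: "f \<in> testF x r \<Longrightarrow> continuous_on UNIV f"
  unfolding testF_def using lipschitz_on_continuous_on by blast

lemma absmul: "\<bar>a\<bar> \<le> 1 \<Longrightarrow> \<bar>b\<bar> \<le> B \<Longrightarrow> \<bar>a * b\<bar> \<le> (B::real)"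
proof -
  assume a: "\<bar>a\<bar> \<le> 1" and b: "\<bar>b\<bar> \<le> B"
  have "\<bar>a\<bar> * \<bar>b\<bar> \<le> 1 * \<bar>b\<bar>" by (rule mult_right_mono[OF a]) simp
  then show ?thesis using b by (simp add: abs_mult)
qed

lemma phiF_integrable:
  assumes "cutoff \<phi>" "loc_finite_borel \<mu>" "r > 0" "f \<in> testF x r"
  shows "integrable \<mu> (\<lambda>w. \<phi> (cmod (w - x) / r) * f w)"
proof (rule lfb_integrable[OF assms(2), where B=8 and y=x and \<rho>="4*r"])
  show "continuous_on UNIV (\<lambda>w. \<phi> (cmod (w - x) / r) * f w)"
    using cutoff_cont[OF assms(1,3)] testF_cont[OF assms(4)] by (intro continuous_intros)
  fix v
  have "\<bar>\<phi> (cmod (v - x) / r)\<bar> \<le> 1" using cutoff_range[OF assms(1), of "cmod (v - x) / r"] assms(3) by auto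
  moreover have "\<bar>f v\<bar> \<le> 8" using testF_bound[OF assms(4,3), of v] by (cases "v \<in> ball x (4*r)") auto
  ultimately show "\<bar>\<phi> (cmod (v - x) / r) * f v\<bar> \<le> 8"
    by (rule absmul)
  show "v \<notin> ball x (4 * r) \<Longrightarrow> \<phi> (cmod (v - x) / r) * f v = 0"
    using testF_zero[OF assms(4)] by simp
qed

lemma phiF_bound:
  assumes "cutoff \<phi>" "loc_finite_borel \<mu>" "r > 0" "f \<in> testF x r"
  shows "\<bar>integral\<^sup>L \<mu> (\<lambda>w. \<phi> (cmod (w - x) / r) * f w)\<bar> \<le> 8 * measure \<mu> (ball x (4 * r))"
proof (rule lfb_int_abs[OF assms(2) phiF_integrable[OF assms]])
  fix v
  have "\<bar>\<phi> (cmod (v - x) / r)\<bar> \<le> 1" using cutoff_range[OF assms(1), of "cmod (v - x) / r"] assms(3) by auto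
  moreover have "\<bar>f v\<bar> \<le> 8 * indicator (ball x (4 * r)) v" using testF_bound[OF assms(4,3), of v] .
  ultimately show "\<bar>\<phi> (cmod (v - x) / r) * f v\<bar> \<le> 8 * indicator (ball x (4 * r)) v"
    by (rule absmul)
qed

lemma alpha_bdd:
  assumes "cutoff \<phi>" "loc_finite_borel \<mu>" "loc_finite_borel \<nu>" "r > 0"
  shows "bdd_above ((\<lambda>f. \<bar>(1/r) * (integral\<^sup>L \<mu> (\<lambda>w. \<phi> (cmod (w - x) / r) * f w)
        - cconst \<phi> \<mu> \<nu> x r * integral\<^sup>L \<nu> (\<lambda>w. \<phi> (cmod (w - x) / r) * f w))\<bar>) ` testF x r)"
proof (rule bdd_aboveI2)
  fix f assume f: "f \<in> testF x r"
  let ?I1 = "integral\<^sup>L \<mu> (\<lambda>w. \<phi> (cmod (w - x) / r) * f w)"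
  let ?I2 = "integral\<^sup>L \<nu> (\<lambda>w. \<phi> (cmod (w - x) / r) * f w)"
  let ?c = "cconst \<phi> \<mu> \<nu> x r"
  have "\<bar>?I1 - ?c * ?I2\<bar> \<le> \<bar>?I1\<bar> + \<bar>?c\<bar> * \<bar>?I2\<bar>" using abs_triangle_ineq4[of ?I1 "?c * ?I2"] by (simp add: abs_mult)
  also have "\<dots> \<le> 8 * measure \<mu> (ball x (4 * r)) + \<bar>?c\<bar> * (8 * measure \<nu> (ball x (4 * r)))"
    using phiF_bound[OF assms(1,2,4) f] phiF_bound[OF assms(1,3,4) f]
    by (intro add_mono mult_left_mono) auto
  finally have *: "\<bar>?I1 - ?c * ?I2\<bar> \<le> 8 * measure \<mu> (ball x (4 * r)) + \<bar>?c\<bar> * (8 * measure \<nu> (ball x (4 * r)))" .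
  have "\<bar>(1/r) * (?I1 - ?c * ?I2)\<bar> = (1/r) * \<bar>?I1 - ?c * ?I2\<bar>" using assms(4) by (simp add: abs_mult)
  also have "\<dots> \<le> (1/r) * (8 * measure \<mu> (ball x (4 * r)) + \<bar>?c\<bar> * (8 * measure \<nu> (ball x (4 * r))))"
    by (rule mult_left_mono[OF *]) (use assms(4) in simp)
  finally show "\<bar>(1/r) * (?I1 - ?c * ?I2)\<bar> \<le> (1/r) * (8 * measure \<mu> (ball x (4 * r)) + \<bar>?c\<bar> * (8 * measure \<nu> (ball x (4 * r))))" 
    .
qed

lemma test_ineq:
  assumes "cutoff \<phi>" "loc_finite_borel \<mu>" "loc_finite_borel \<nu>" "r > 0" "L > 0"
    and Lip: "L-lipschitz_on UNIV F"
    and supp: "\<And>v. v \<notin> ball w \<rho> \<Longrightarrow> F v = 0"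
    and sub: "cball w \<rho> \<subseteq> ball x (4 * r)"
  shows "\<bar>integral\<^sup>L \<mu> (\<lambda>v. \<phi> (cmod (v - x) / r) * F v)
           - cconst \<phi> \<mu> \<nu> x r * integral\<^sup>L \<nu> (\<lambda>v. \<phi> (cmod (v - x) / r) * F v)\<bar>
         \<le> alpha \<phi> \<mu> \<nu> x r * r^2 * L"
proof -
  define k where "k = 1 / (r * L)"
  have kpos: "k > 0" using assms(4,5) by (simp add: k_def)
  define G where "G = (\<lambda>v. k * F v)"
  have GL: "(1/r)-lipschitz_on UNIV G"
  proof -
    have "(k * L)-lipschitz_on UNIV G" unfolding G_def
      by (rule lipschitz_on_cmult_real_nonneg[OF Lip]) (use kpos in simp)
    moreover have "k * L = 1 / r" using assms(5) by (simp add: k_def)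
    ultimately show ?thesis by simp
  qed
  have Gsub: "{v. G v \<noteq> 0} \<subseteq> ball w \<rho>"
  proof
    fix v assume "v \<in> {v. G v \<noteq> 0}"
    then have "F v \<noteq> 0" by (simp add: G_def)
    then show "v \<in> ball w \<rho>" using supp by (meson)
  qed
  have cl: "closure {v. G v \<noteq> 0} \<subseteq> cball w \<rho>"
    by (rule closure_minimal[OF order_trans[OF Gsub ball_subset_cball] closed_cball])
  have G: "G \<in> testF x r"
    unfolding testF_def mem_Collect_eq
  proof (intro conjI)
    show "(1/r)-lipschitz_on UNIV G" by (rule GL)
    show "compact (closure {v. G v \<noteq> 0})"
      by (subst compact_closure) (rule bounded_subset[OF bounded_ball Gsub])
    show "closure {v. G v \<noteq> 0} \<subseteq> ball x (4 * r)" by (rule order_trans[OF cl sub])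
  qed
  let ?I1 = "integral\<^sup>L \<mu> (\<lambda>v. \<phi> (cmod (v - x) / r) * F v)"
  let ?I2 = "integral\<^sup>L \<nu> (\<lambda>v. \<phi> (cmod (v - x) / r) * F v)"
  let ?c = "cconst \<phi> \<mu> \<nu> x r"
  have e1: "integral\<^sup>L \<mu> (\<lambda>v. \<phi> (cmod (v - x) / r) * G v) = k * ?I1"
    unfolding G_def by (simp add: mult.left_commute)
  have e2: "integral\<^sup>L \<nu> (\<lambda>v. \<phi> (cmod (v - x) / r) * G v) = k * ?I2"
    unfolding G_def by (simp add: mult.left_commute)
  have "\<bar>(1/r) * (integral\<^sup>L \<mu> (\<lambda>v. \<phi> (cmod (v - x) / r) * G v)
        - ?c * integral\<^sup>L \<nu> (\<lambda>v. \<phi> (cmod (v - x) / r) * G v))\<bar> \<le> alpha \<phi> \<mu> \<nu> x r"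
    unfolding alpha_def by (rule cSUP_upper[OF G alpha_bdd[OF assms(1-4)]])
  then have "\<bar>(1/r) * (k * ?I1 - ?c * (k * ?I2))\<bar> \<le> alpha \<phi> \<mu> \<nu> x r" by (simp only: e1 e2)
  moreover have "\<bar>(1/r) * (k * ?I1 - ?c * (k * ?I2))\<bar> = (k / r) * \<bar>?I1 - ?c * ?I2\<bar>"
  proof -
    have "(1/r) * (k * ?I1 - ?c * (k * ?I2)) = (k / r) * (?I1 - ?c * ?I2)" by (simp add: algebra_simps)
    then show ?thesis using kpos assms(4) by (simp only: abs_mult) simp
  qed
  ultimately have *: "(k / r) * \<bar>?I1 - ?c * ?I2\<bar> \<le> alpha \<phi> \<mu> \<nu> x r" by simp
  have "\<bar>?I1 - ?c * ?I2\<bar> = (r^2 * L) * ((k / r) * \<bar>?I1 - ?c * ?I2\<bar>)"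
    using assms(4,5) by (simp add: k_def power2_eq_square)
  also have "\<dots> \<le> (r^2 * L) * alpha \<phi> \<mu> \<nu> x r"
    by (rule mult_left_mono[OF *]) (use assms(4,5) in simp)
  finally show ?thesis by (simp add: mult_ac)
qed

lemma cconst_nonneg:
  assumes "cutoff \<phi>" "r > 0"
  shows "cconst \<phi> \<mu> \<nu> x r \<ge> 0"
proof -
  have nn: "0 \<le> integral\<^sup>L m (\<lambda>w. \<phi> (cmod (w - x) / r))" for m :: "complex measure"
    by (rule Bochner_Integration.integral_nonneg) (use cutoff_range[OF assms(1)] assms(2) in auto)
  show ?thesis unfolding cconst_def Let_def using nn[of \<mu>] nn[of \<nu>] by simp
qed

lemma bump_int:
  assumes "cutoff \<phi>" "loc_finite_borel m" "r > 0" "a < b"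
  shows "integrable m (\<lambda>v. \<phi> (cmod (v - x) / r) * bump w a b v)"
    and "integral\<^sup>L m (\<lambda>v. \<phi> (cmod (v - x) / r) * bump w a b v) \<le> measure m (ball w b)"
    and "ball w a \<subseteq> ball x (3 * r) \<Longrightarrow> measure m (ball w a) \<le> integral\<^sup>L m (\<lambda>v. \<phi> (cmod (v - x) / r) * bump w a b v)"
proof -
  have ph: "0 \<le> \<phi> (cmod (v - x) / r) \<and> \<phi> (cmod (v - x) / r) \<le> 1" for v
    using cutoff_range[OF assms(1)] assms(3) by auto
  have z: "bump w a b v = 0" if "v \<notin> ball w b" for v
    using bump_zero[OF assms(4)] that by (simp add: dist_norm norm_minus_commute)
  show I: "integrable m (\<lambda>v. \<phi> (cmod (v - x) / r) * bump w a b v)"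
  proof (rule lfb_integrable[OF assms(2), where B=1 and y=w and \<rho>=b])
    show "continuous_on UNIV (\<lambda>v. \<phi> (cmod (v - x) / r) * bump w a b v)"
      using cutoff_cont[OF assms(1,3)] bump_cont[OF assms(4)] by (intro continuous_intros)
    fix v
    show "\<bar>\<phi> (cmod (v - x) / r) * bump w a b v\<bar> \<le> 1"
      by (rule absmul) (use ph[of v] bump_range[of w a b v] in auto)
    show "v \<notin> ball w b \<Longrightarrow> \<phi> (cmod (v - x) / r) * bump w a b v = 0" using z by simp
  qed
  show "integral\<^sup>L m (\<lambda>v. \<phi> (cmod (v - x) / r) * bump w a b v) \<le> measure m (ball w b)"
  proof (rule lfb_int_le[OF assms(2) I])
    fix v
    show "\<phi> (cmod (v - x) / r) * bump w a b v \<le> indicator (ball w b) v"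
    proof (cases "v \<in> ball w b")
      case True
      then show ?thesis using ph[of v] bump_range[of w a b v] by (simp add: mult_le_one)
    next
      case False
      then show ?thesis using z[OF False] by simp
    qed
  qed
  assume sub: "ball w a \<subseteq> ball x (3 * r)"
  show "measure m (ball w a) \<le> integral\<^sup>L m (\<lambda>v. \<phi> (cmod (v - x) / r) * bump w a b v)"
  proof (rule lfb_int_ge[OF assms(2) I])
    fix v
    show "indicator (ball w a) v \<le> \<phi> (cmod (v - x) / r) * bump w a b v"
    proof (cases "v \<in> ball w a")
      case True
      then have "v \<in> ball x (3 * r)" using sub by (rule subsetD[rotated])
      then have "cmod (v - x) / r < 3" using assms(3) by (simp add: dist_norm norm_minus_commute field_simps)
      moreover have "0 \<le> cmod (v - x) / r" using assms(3) by simp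
      ultimately have "\<phi> (cmod (v - x) / r) = 1" using assms(1) unfolding cutoff_def by auto
      moreover have "bump w a b v = 1" using bump_one[OF assms(4)] True
        by (simp add: dist_norm norm_minus_commute)
      ultimately show ?thesis using True by simp
    next
      case False
      then show ?thesis using ph[of v] bump_range[of w a b v] by simp
    qed
  qed
qed

lemma generic_step:
  assumes "cutoff \<phi>" "loc_finite_borel \<mu>" "loc_finite_borel \<nu>" "r > 0" "a < b"
    and "cball w b \<subseteq> ball x (4 * r)" "ball w a \<subseteq> ball x (3 * r)"
  shows "measure \<mu> (ball w a) \<le> cconst \<phi> \<mu> \<nu> x r * measure \<nu> (ball w b) + alpha \<phi> \<mu> \<nu> x r * r^2 / (b - a)"
    and "cconst \<phi> \<mu> \<nu> x r * measure \<nu> (ball w a) \<le> measure \<mu> (ball w b) + alpha \<phi> \<mu> \<nu> x r * r^2 / (b - a)"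
proof -
  let ?I1 = "integral\<^sup>L \<mu> (\<lambda>v. \<phi> (cmod (v - x) / r) * bump w a b v)"
  let ?I2 = "integral\<^sup>L \<nu> (\<lambda>v. \<phi> (cmod (v - x) / r) * bump w a b v)"
  let ?c = "cconst \<phi> \<mu> \<nu> x r"
  have T: "\<bar>?I1 - ?c * ?I2\<bar> \<le> alpha \<phi> \<mu> \<nu> x r * r^2 * (1 / (b - a))"
  proof (rule test_ineq[OF assms(1-4), where w=w and \<rho>=b])
    show "0 < 1 / (b - a)" using assms(5) by simp
    show "(1 / (b - a))-lipschitz_on UNIV (bump w a b)" by (rule bump_lip[OF assms(5)])
    show "\<And>v. v \<notin> ball w b \<Longrightarrow> bump w a b v = 0"
      using bump_zero[OF assms(5)] by (simp add: dist_norm norm_minus_commute)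
    show "cball w b \<subseteq> ball x (4 * r)" by (rule assms(6))
  qed
  have E: "alpha \<phi> \<mu> \<nu> x r * r^2 * (1 / (b - a)) = alpha \<phi> \<mu> \<nu> x r * r^2 / (b - a)" by simp
  have c0: "?c \<ge> 0" by (rule cconst_nonneg[OF assms(1,4)])
  have m1: "measure \<mu> (ball w a) \<le> ?I1" by (rule bump_int(3)[OF assms(1,2,4,5) assms(7)])
  have m2: "?I1 \<le> measure \<mu> (ball w b)" by (rule bump_int(2)[OF assms(1,2,4,5)])
  have n1: "measure \<nu> (ball w a) \<le> ?I2" by (rule bump_int(3)[OF assms(1,3,4,5) assms(7)])
  have n2: "?I2 \<le> measure \<nu> (ball w b)" by (rule bump_int(2)[OF assms(1,3,4,5)])
  have "?c * ?I2 \<le> ?c * measure \<nu> (ball w b)" by (rule mult_left_mono[OF n2 c0])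
  then show "measure \<mu> (ball w a) \<le> ?c * measure \<nu> (ball w b) + alpha \<phi> \<mu> \<nu> x r * r^2 / (b - a)"
    using m1 T E by linarith
  have "?c * measure \<nu> (ball w a) \<le> ?c * ?I2" by (rule mult_left_mono[OF n1 c0])
  then show "?c * measure \<nu> (ball w a) \<le> measure \<mu> (ball w b) + alpha \<phi> \<mu> \<nu> x r * r^2 / (b - a)"
    using m2 T E by linarith
qed

lemma supp_pos:
  assumes "loc_finite_borel \<nu>" "x \<in> msupp \<nu>" "\<rho> > 0"
  shows "measure \<nu> (ball x \<rho>) > 0"
proof -
  have p: "emeasure \<nu> (ball x \<rho>) > 0" using assms(2,3) unfolding msupp_def by auto
  have f: "emeasure \<nu> (ball x \<rho>) \<noteq> top" using lfb_ball_fin[OF assms(1), of x \<rho>] by simp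
  show ?thesis using p emeasure_eq_ennreal_measure[OF f] by simp
qed

lemma pos_supp:
  assumes "loc_finite_borel \<nu>" "measure \<nu> (ball z \<rho>) > 0"
  shows "\<exists>z'\<in>msupp \<nu>. z' \<in> ball z \<rho>"
proof (rule ccontr)
  assume H: "\<not> (\<exists>z'\<in>msupp \<nu>. z' \<in> ball z \<rho>)"
  let ?F = "{ball v e | v e. e > 0 \<and> emeasure \<nu> (ball v e) = 0}"
  have cov: "ball z \<rho> \<subseteq> \<Union>?F"
  proof
    fix v assume v: "v \<in> ball z \<rho>"
    then have "v \<notin> msupp \<nu>" using H by auto
    then obtain e where "e > 0" "\<not> emeasure \<nu> (ball v e) > 0" unfolding msupp_def by auto
    then have "e > 0" "emeasure \<nu> (ball v e) = 0" by (auto simp: not_less)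
    then show "v \<in> \<Union>?F" by (auto intro!: exI[of _ "ball v e"])
  qed
  obtain F' where F': "F' \<subseteq> ?F" "countable F'" "\<Union>F' = \<Union>?F"
    by (rule Lindelof[of ?F]) auto
  have N: "(\<Union>B\<in>F'. B) \<in> null_sets \<nu>"
  proof (rule null_sets_UN'[OF F'(2)])
    fix B assume "B \<in> F'"
    then obtain v e where "B = ball v e" "emeasure \<nu> (ball v e) = 0" using F'(1) by auto
    then show "B \<in> null_sets \<nu>" using lfb_sets[OF assms(1)] by (auto simp: null_sets_def)
  qed
  have S: "ball z \<rho> \<subseteq> (\<Union>B\<in>F'. B)" using cov F'(3) by simp
  have M: "ball z \<rho> \<in> sets \<nu>" using lfb_sets[OF assms(1)] by simp
  have "ball z \<rho> \<in> null_sets \<nu>" by (rule null_sets_subset[OF N M S])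
  then have "measure \<nu> (ball z \<rho>) = 0" by (simp add: measure_def null_setsD1)
  then show False using assms(2) by simp
qed

lemma Dratio_facts:
  assumes "loc_finite_borel \<nu>" "x \<in> msupp \<nu>" "Dratio \<nu> \<noteq> \<infinity>"
  shows "real_of_ereal (Dratio \<nu>) \<ge> 1"
    and "\<And>x1 (r1::real) z1 (s1::real). x1 \<in> msupp \<nu> \<Longrightarrow> z1 \<in> msupp \<nu> \<Longrightarrow> r1 > 0 \<Longrightarrow> s1 > 0 \<Longrightarrow>
          dens \<nu> x1 r1 \<le> real_of_ereal (Dratio \<nu>) * dens \<nu> z1 s1"
proof -
  let ?S = "{(x, r, z, s). r > 0 \<and> s > 0 \<and> x \<in> msupp \<nu> \<and> z \<in> msupp \<nu>}"
  let ?f = "\<lambda>p. case p of (x, r, z, s) \<Rightarrow> ereal (dens \<nu> x r / dens \<nu> z s)"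
  have up: "ereal (dens \<nu> x1 r1 / dens \<nu> z1 s1) \<le> Dratio \<nu>"
    if "x1 \<in> msupp \<nu>" "z1 \<in> msupp \<nu>" "r1 > 0" "s1 > 0" for x1 z1 and r1 s1 :: real
  proof -
    have "(x1, r1, z1, s1) \<in> ?S" using that by auto
    then have "?f (x1, r1, z1, s1) \<le> (SUP p\<in>?S. ?f p)" by (rule SUP_upper)
    then show ?thesis unfolding Dratio_def by simp
  qed
  have dpos: "dens \<nu> y \<rho> > 0" if "y \<in> msupp \<nu>" "\<rho> > 0" for y \<rho>
    using supp_pos[OF assms(1) that] that(2) by (simp add: dens_def)
  have "ereal 1 \<le> Dratio \<nu>" using up[OF assms(2) assms(2), of 1 1] dpos[OF assms(2), of 1] by simp
  then obtain D where D: "Dratio \<nu> = ereal D" "D \<ge> 1" using assms(3)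
    by (cases "Dratio \<nu>") auto
  show "real_of_ereal (Dratio \<nu>) \<ge> 1" using D by simp
  fix x1 z1 and r1 s1 :: real assume h: "x1 \<in> msupp \<nu>" "z1 \<in> msupp \<nu>" "r1 > 0" "s1 > 0"
  have "dens \<nu> x1 r1 / dens \<nu> z1 s1 \<le> D" using up[OF h] D(1) by simp
  then show "dens \<nu> x1 r1 \<le> real_of_ereal (Dratio \<nu>) * dens \<nu> z1 s1"
    using dpos[OF h(2,4)] D(1) by (simp add: pos_divide_le_eq mult.commute)
qed

lemma line_facts:
  assumes "line_measure \<nu>" "x \<in> msupp \<nu>"
  obtains k where "k > 0" "\<And>w \<rho>. \<rho> > 0 \<Longrightarrow> measure \<nu> (ball w \<rho>) \<le> 2 * k * \<rho>"
    "\<And>\<rho>. \<rho> > 0 \<Longrightarrow> measure \<nu> (ball x \<rho>) \<ge> 2 * k * \<rho>"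
proof -
  obtain k a u where k: "k > 0" and u: "cmod u = 1"
    and nu: "\<nu> = scale_measure (ennreal k) (distr lborel borel (\<lambda>t. a + of_real t * u))"
    using assms(1) unfolding line_measure_def by blast
  define g where "g = (\<lambda>t::real. a + of_real t * u)"
  have u0: "u \<noteq> 0" using u by auto
  have gm: "g \<in> measurable lborel borel"
  proof -
    have "continuous_on UNIV g" unfolding g_def by (intro continuous_intros)
    then have "g \<in> borel_measurable borel" by (rule borel_measurable_continuous_onI)
    then show ?thesis by simp
  qed
  have em: "emeasure \<nu> (ball w \<rho>) = ennreal k * emeasure lborel (g -` ball w \<rho>)" for w \<rho>
    unfolding nu g_def[symmetric] using emeasure_distr[OF gm, of "ball w \<rho>"] by simp
  have gd: "cmod (g t - w) = cmod (of_real t - (w - a) / u)" for t w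
  proof -
    have "g t - w = u * (of_real t - (w - a) / u)" using u0 unfolding g_def by (simp add: field_simps)
    then show ?thesis using u by (simp add: norm_mult)
  qed
  have upE: "emeasure \<nu> (ball w \<rho>) \<le> ennreal (2 * k * \<rho>)" if "\<rho> > 0" for w \<rho>
  proof -
    define q where "q = (w - a) / u"
    have "g -` ball w \<rho> \<subseteq> {Re q - \<rho> <..< Re q + \<rho>}"
    proof
      fix t assume "t \<in> g -` ball w \<rho>"
      then have "cmod (of_real t - q) < \<rho>" using gd[of t w] by (simp add: q_def dist_norm norm_minus_commute)
      moreover have "\<bar>Re (of_real t - q)\<bar> \<le> cmod (of_real t - q)" by (rule abs_Re_le_cmod)
      ultimately have "\<bar>t - Re q\<bar> < \<rho>" by simp
      then show "t \<in> {Re q - \<rho> <..< Re q + \<rho>}" by auto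
    qed
    then have "emeasure lborel (g -` ball w \<rho>) \<le> emeasure lborel {Re q - \<rho> <..< Re q + \<rho>}"
      by (rule emeasure_mono) simp
    also have "\<dots> = ennreal (2 * \<rho>)" using that by simp
    finally have "emeasure \<nu> (ball w \<rho>) \<le> ennreal k * ennreal (2 * \<rho>)"
      unfolding em by (rule mult_left_mono) simp
    also have "\<dots> = ennreal (2 * k * \<rho>)" using k that by (simp add: ennreal_mult[symmetric] mult_ac)
    finally show ?thesis .
  qed
  have fin: "emeasure \<nu> (ball w \<rho>) \<noteq> top" if "\<rho> > 0" for w \<rho>
    using upE[OF that, of w] by (auto simp: top_unique)
  have up: "measure \<nu> (ball w \<rho>) \<le> 2 * k * \<rho>" if "\<rho> > 0" for w \<rho>
  proof -
    have "ennreal (measure \<nu> (ball w \<rho>)) \<le> ennreal (2 * k * \<rho>)"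
      using upE[OF that, of w] emeasure_eq_ennreal_measure[OF fin[OF that, of w]] by simp
    then show ?thesis using k that by (simp add: ennreal_le_iff)
  qed
  define q0 where "q0 = (x - a) / u"
  have Im0: "Im q0 = 0"
  proof (rule ccontr)
    assume ne: "Im q0 \<noteq> 0"
    define e where "e = \<bar>Im q0\<bar>"
    have e0: "e > 0" using ne by (simp add: e_def)
    have "g -` ball x e = {}"
    proof -
      have "\<not> cmod (g t - x) < e" for t
      proof -
        have "\<bar>Im (of_real t - q0)\<bar> \<le> cmod (of_real t - q0)" by (rule abs_Im_le_cmod)
        then show ?thesis using gd[of t x] by (simp add: e_def q0_def)
      qed
      then show ?thesis by (auto simp: dist_norm norm_minus_commute)
    qed
    then have "emeasure \<nu> (ball x e) = 0" using em[of x e] by simp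
    moreover have "emeasure \<nu> (ball x e) > 0" using assms(2) e0 unfolding msupp_def by auto
    ultimately show False by simp
  qed
  have lo: "measure \<nu> (ball x \<rho>) \<ge> 2 * k * \<rho>" if "\<rho> > 0" for \<rho>
  proof -
    define t1 where "t1 = Re q0"
    have q0r: "q0 = of_real t1" using Im0 by (simp add: t1_def complex_eq_iff)
    have "{t1 - \<rho> <..< t1 + \<rho>} \<subseteq> g -` ball x \<rho>"
    proof
      fix t assume "t \<in> {t1 - \<rho> <..< t1 + \<rho>}"
      then have "\<bar>t - t1\<bar> < \<rho>" by auto
      moreover have "cmod (g t - x) = \<bar>t - t1\<bar>"
        using gd[of t x] q0r unfolding q0_def by (simp flip: of_real_diff)
      ultimately show "t \<in> g -` ball x \<rho>" by (simp add: dist_norm norm_minus_commute)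
    qed
    then have "emeasure lborel {t1 - \<rho> <..< t1 + \<rho>} \<le> emeasure lborel (g -` ball x \<rho>)"
      by (rule emeasure_mono) (use measurable_sets[OF gm, of "ball x \<rho>"] in simp)
    then have "ennreal (2 * \<rho>) \<le> emeasure lborel (g -` ball x \<rho>)" using that by simp
    then have "ennreal k * ennreal (2 * \<rho>) \<le> emeasure \<nu> (ball x \<rho>)"
      unfolding em by (rule mult_left_mono) simp
    then have "ennreal (2 * k * \<rho>) \<le> ennreal (measure \<nu> (ball x \<rho>))"
      using k that emeasure_eq_ennreal_measure[OF fin[OF that, of x]]
      by (simp add: ennreal_mult[symmetric] mult_ac)
    then show ?thesis by (simp add: ennreal_le_iff)
  qed
  show ?thesis by (rule that[OF k up lo])
qed

lemma arith1:
  fixes r s g :: real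
  assumes "0 < r" "0 < g" "s \<le> r" "3 * g * r < s"
  shows "(s + g * r) * (2 * r + g * r) \<le> (2 * s + 15 * g * r) * (r - g * r)"
proof -
  have a: "13 * r - 3 * s - 16 * (g * r) > 0" using assms by linarith
  have "g * r * (13 * r - 3 * s - 16 * (g * r)) > 0" using a assms by simp
  moreover have "(2 * s + 15 * g * r) * (r - g * r) - (s + g * r) * (2 * r + g * r)
      = g * r * (13 * r - 3 * s - 16 * (g * r))" by (simp add: algebra_simps)
  ultimately show ?thesis by linarith
qed

lemma arith2:
  fixes r s h :: real
  assumes "0 < r" "0 < h" "s \<le> r" "3 * h * r < s"
  shows "(2 * s - 15 * h * r) * (r + h * r) \<le> (s - h * r) * (2 * r - h * r)"
proof -
  have "h * r > 0" using assms by simp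
  then have a: "13 * r - 3 * s + 16 * (h * r) > 0" using assms by linarith
  have "h * r * (13 * r - 3 * s + 16 * (h * r)) > 0" using a assms by simp
  moreover have "(s - h * r) * (2 * r - h * r) - (2 * s - 15 * h * r) * (r + h * r)
      = h * r * (13 * r - 3 * s + 16 * (h * r))" by (simp add: algebra_simps)
  ultimately show ?thesis by linarith
qed

lemma sqrt_small:
  fixes \<gamma> r s :: real
  assumes "\<gamma> \<ge> 0" "r > 0" "s > 0" "\<gamma> < (s / r)\<^sup>2 / 9"
  shows "3 * sqrt \<gamma> * r < s"
proof -
  have "(s / r)\<^sup>2 / 9 = (s / (3 * r))\<^sup>2" by (simp add: power2_eq_square field_simps)
  then have "\<gamma> < (s / (3 * r))\<^sup>2" using assms(4) by simp
  then have "sqrt \<gamma> < sqrt ((s / (3 * r))\<^sup>2)" by (rule real_sqrt_less_mono)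
  moreover have "sqrt ((s / (3 * r))\<^sup>2) = s / (3 * r)" using assms(2,3) by simp
  ultimately have "sqrt \<gamma> < s / (3 * r)" by simp
  then show ?thesis using assms(2) by (simp add: field_simps)
qed

lemma part1_core:
  assumes "cutoff \<phi>" "loc_finite_borel \<mu>" "loc_finite_borel \<nu>"
    and "\<gamma> > 0" "r > 0" "0 < s" "s \<le> r"
    and sub: "ball z s \<subseteq> ball x (3 * r)"
    and al: "alpha \<phi> \<mu> \<nu> x r \<le> \<gamma> * dens \<mu> x r"
    and small: "\<gamma> < (s / r)\<^sup>2 / 9"
    and K: "K \<ge> 0" "measure \<nu> (ball z (s + sqrt \<gamma> * r)) \<le> K * measure \<nu> (ball x (r - sqrt \<gamma> * r))"
  shows "measure \<mu> (ball z s) \<le> (K * (2 * r + sqrt \<gamma> * r) + sqrt \<gamma> * r) * dens \<mu> x r"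
proof -
  define g where "g = sqrt \<gamma>"
  define t where "t = g * r"
  define c where "c = cconst \<phi> \<mu> \<nu> x r"
  define A where "A = alpha \<phi> \<mu> \<nu> x r"
  define \<delta> where "\<delta> = dens \<mu> x r"
  have g0: "g > 0" using assms(4) by (simp add: g_def)
  have g3: "3 * g * r < s" unfolding g_def by (rule sqrt_small) (use assms in auto)
  have t0: "t > 0" using g0 assms(5) by (simp add: t_def)
  have g3': "3 * (g * r) < s" using g3 by (simp add: mult.assoc)
  have tr: "t < r" using g3' assms(7) t0 unfolding t_def by linarith
  have zx: "dist z x + s \<le> 3 * r" using sub assms(6) by (simp add: ball_subset_ball_iff)
  have c0: "c \<ge> 0" unfolding c_def by (rule cconst_nonneg[OF assms(1,5)])
  have d0: "\<delta> \<ge> 0" using assms(5) by (simp add: \<delta>_def dens_def)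
  have Mx: "measure \<mu> (ball x r) = 2 * r * \<delta>" using assms(5) by (simp add: \<delta>_def dens_def)
  have st1: "measure \<mu> (ball z s) \<le> c * measure \<nu> (ball z (s + t)) + A * r^2 / ((s + t) - s)"
    unfolding c_def A_def
  proof (rule generic_step(1)[OF assms(1-3,5)])
    show "s < s + t" using t0 by simp
    show "cball z (s + t) \<subseteq> ball x (4 * r)" using zx tr by (simp add: cball_subset_ball_iff)
  qed (rule sub)
  have st2: "c * measure \<nu> (ball x (r - t)) \<le> measure \<mu> (ball x r) + A * r^2 / (r - (r - t))"
    unfolding c_def A_def
  proof (rule generic_step(2)[OF assms(1-3,5)])
    show "r - t < r" using t0 by simp
    show "cball x r \<subseteq> ball x (4 * r)" using assms(5) by (simp add: cball_subset_ball_iff)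
    show "ball x (r - t) \<subseteq> ball x (3 * r)" using t0 assms(5) by (simp add: ball_subset_ball_iff)
  qed
  have E: "A * r^2 / t \<le> g * r * \<delta>"
  proof -
    have "A * r^2 / t \<le> (\<gamma> * \<delta>) * r^2 / t"
      using al t0 unfolding A_def \<delta>_def by (intro divide_right_mono mult_right_mono) auto
    also have "(\<gamma> * \<delta>) * r^2 / t = g * r * \<delta>"
      using assms(4,5) g0 unfolding t_def g_def by (simp add: power2_eq_square field_simps)
    finally show ?thesis .
  qed
  have "c * measure \<nu> (ball z (s + t)) \<le> c * (K * measure \<nu> (ball x (r - t)))"
    using K(2) c0 unfolding t_def g_def by (intro mult_left_mono) auto
  also have "\<dots> = K * (c * measure \<nu> (ball x (r - t)))" by simp
  also have "\<dots> \<le> K * (2 * r * \<delta> + g * r * \<delta>)"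
    using st2 E Mx K(1) by (intro mult_left_mono) auto
  finally have "measure \<mu> (ball z s) \<le> K * (2 * r * \<delta> + g * r * \<delta>) + g * r * \<delta>"
    using st1 E by simp
  then show ?thesis by (simp add: g_def \<delta>_def algebra_simps)
qed

lemma part2_core:
  assumes "cutoff \<phi>" "loc_finite_borel \<mu>" "loc_finite_borel \<nu>"
    and "\<gamma> > 0" "r > 0" "0 < s" "s \<le> r"
    and sub: "ball z s \<subseteq> ball x (3 * r)"
    and al: "alpha \<phi> \<mu> \<nu> x r \<le> \<gamma> * dens \<mu> x r"
    and D1: "D \<ge> 1"
    and small: "\<gamma> < (s / r)\<^sup>2 / (9 * D)"
    and Db: "\<And>t. 0 < t \<Longrightarrow> t < s \<Longrightarrow> dens \<nu> x (r + t) \<le> D * dens \<nu> z (s - t)"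
  shows "dens \<mu> z s \<ge> (1 / D) * (1 - 8 * sqrt (D * \<gamma>) * (r / s)) * dens \<mu> x r"
proof -
  define h where "h = sqrt (D * \<gamma>)"
  define t where "t = h * r"
  define c where "c = cconst \<phi> \<mu> \<nu> x r"
  define A where "A = alpha \<phi> \<mu> \<nu> x r"
  define \<delta> where "\<delta> = dens \<mu> x r"
  have D0: "D > 0" using D1 by simp
  have Dg: "D * \<gamma> \<ge> 0" using D0 assms(4) by simp
  have h0: "h > 0" using assms(4) D0 by (simp add: h_def)
  have hsq: "h * h = D * \<gamma>" using Dg by (simp add: h_def)
  have h3: "3 * h * r < s" unfolding h_def
  proof (rule sqrt_small)
    have "D * \<gamma> < D * ((s / r)\<^sup>2 / (9 * D))" by (rule mult_strict_left_mono[OF small D0])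
    then show "D * \<gamma> < (s / r)\<^sup>2 / 9" using D0 by simp
  qed (use Dg assms in auto)
  have t0: "t > 0" using h0 assms(5) by (simp add: t_def)
  have h3': "3 * (h * r) < s" using h3 by (simp add: mult.assoc)
  have ts: "t < s" using h3' t0 unfolding t_def by linarith
  have tr: "t < r" using ts assms(7) by linarith
  have zx: "dist z x + s \<le> 3 * r" using sub assms(6) by (simp add: ball_subset_ball_iff)
  have c0: "c \<ge> 0" unfolding c_def by (rule cconst_nonneg[OF assms(1,5)])
  have d0: "\<delta> \<ge> 0" using assms(5) by (simp add: \<delta>_def dens_def)
  have Mx: "measure \<mu> (ball x r) = 2 * r * \<delta>" using assms(5) by (simp add: \<delta>_def dens_def)
  have st1: "c * measure \<nu> (ball z (s - t)) \<le> measure \<mu> (ball z s) + A * r^2 / (s - (s - t))"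
    unfolding c_def A_def
  proof (rule generic_step(2)[OF assms(1-3,5)])
    show "s - t < s" using t0 by simp
    show "cball z s \<subseteq> ball x (4 * r)" using zx assms(5) by (simp add: cball_subset_ball_iff)
    show "ball z (s - t) \<subseteq> ball x (3 * r)" using zx t0 by (simp add: ball_subset_ball_iff)
  qed
  have st2: "measure \<mu> (ball x r) \<le> c * measure \<nu> (ball x (r + t)) + A * r^2 / ((r + t) - r)"
    unfolding c_def A_def
  proof (rule generic_step(1)[OF assms(1-3,5)])
    show "r < r + t" using t0 by simp
    show "cball x (r + t) \<subseteq> ball x (4 * r)" using tr assms(5) by (simp add: cball_subset_ball_iff)
    show "ball x r \<subseteq> ball x (3 * r)" using assms(5) by (simp add: ball_subset_ball_iff)
  qed
  have E: "A * r^2 / t \<le> h * r * \<delta> / D"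
  proof -
    have "A * r^2 / t \<le> (\<gamma> * \<delta>) * r^2 / t"
      using al t0 unfolding A_def \<delta>_def by (intro divide_right_mono mult_right_mono) auto
    also have "(\<gamma> * \<delta>) * r^2 / t = h * r * \<delta> / D"
    proof -
      have "\<gamma> = h * h / D" using hsq D0 by (simp add: field_simps)
      then show ?thesis using assms(5) h0 D0 unfolding t_def by (simp add: power2_eq_square field_simps)
    qed
    finally show ?thesis .
  qed
  define P where "P = measure \<nu> (ball z (s - t))"
  define Q where "Q = measure \<nu> (ball x (r + t))"
  define w where "w = (s - t) / (D * (r + t))"
  have w0: "w \<ge> 0" using ts t0 assms(5) D0 by (simp add: w_def)
  have PQ: "w * Q \<le> P"
  proof -
    have "Q / (2 * (r + t)) \<le> D * (P / (2 * (s - t)))"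
      using Db[OF t0 ts] unfolding dens_def P_def Q_def .
    then have "Q * (s - t) \<le> (D * (r + t)) * P" using ts t0 assms(5) D0
      by (simp add: field_simps)
    moreover have "D * (r + t) > 0" using t0 assms(5) D0 by simp
    ultimately have "Q * (s - t) / (D * (r + t)) \<le> P" by (simp add: pos_divide_le_eq mult.commute)
    then show ?thesis unfolding w_def by (simp add: mult.commute)
  qed
  have cQ: "c * Q \<ge> 2 * r * \<delta> - h * r * \<delta> / D" using st2 E Mx t0 unfolding Q_def by simp
  have "c * P \<ge> c * (w * Q)" using PQ c0 by (rule mult_left_mono)
  moreover have "c * (w * Q) = w * (c * Q)" by simp
  moreover have "w * (c * Q) \<ge> w * (2 * r * \<delta> - h * r * \<delta> / D)" using cQ w0 by (rule mult_left_mono)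
  ultimately have cP: "c * P \<ge> w * (2 * r * \<delta> - h * r * \<delta> / D)" by linarith
  have Mz: "measure \<mu> (ball z s) \<ge> (w * (2 * r - h * r / D) - h * r / D) * \<delta>"
    using st1 cP E t0 unfolding P_def by (simp add: algebra_simps)
  define X where "X = (s - t) * (2 * r - h * r / D) / (r + t)"
  have wX: "w * (2 * r - h * r / D) = X / D" unfolding w_def X_def using D0 by simp
  have a2: "(2 * s - 15 * h * r) * (r + h * r) \<le> (s - h * r) * (2 * r - h * r)"
    by (rule arith2) (use assms h0 h3 in auto)
  have "h * r / D \<le> h * r" using D1 h0 assms(5) by (simp add: divide_le_eq)
  then have "(s - t) * (2 * r - h * r) \<le> (s - t) * (2 * r - h * r / D)"
    using ts by (intro mult_left_mono) auto
  then have X1: "(s - t) * (2 * r - h * r) / (r + t) \<le> X"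
    unfolding X_def using t0 assms(5) by (intro divide_right_mono) auto
  have X2: "2 * s - 15 * h * r \<le> (s - t) * (2 * r - h * r) / (r + t)"
    using a2 t0 assms(5) unfolding t_def by (simp add: pos_le_divide_eq)
  have X3: "X - h * r \<ge> 2 * s - 16 * h * r" using X1 X2 by linarith
  have "(2 * s - 16 * h * r) / D \<le> (X - h * r) / D" using X3 D0 by (intro divide_right_mono) auto
  then have "(2 * s - 16 * h * r) / D \<le> w * (2 * r - h * r / D) - h * r / D"
    using wX by (simp add: diff_divide_distrib)
  then have "(2 * s - 16 * h * r) / D * \<delta> \<le> measure \<mu> (ball z s)"
    using Mz d0 by (meson mult_right_mono order_trans)
  then have "(2 * s - 16 * h * r) / D * \<delta> / (2 * s) \<le> dens \<mu> z s"
    unfolding dens_def using assms(6) by (intro divide_right_mono) auto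
  moreover have "(2 * s - 16 * h * r) / D * \<delta> / (2 * s) = (1 / D) * (1 - 8 * h * (r / s)) * \<delta>"
    using assms(6) D0 by (simp add: field_simps)
  ultimately show ?thesis by (simp add: h_def \<delta>_def)
qed

lemma fin_core:
  fixes r s g C M \<delta> :: real
  assumes "r > 0" "s > 0" "s \<le> r" "g > 0" "3 * g * r < s" "C \<ge> 0" "\<delta> \<ge> 0"
    and M: "M \<le> ((C * ((s + g * r) / (r - g * r))) * (2 * r + g * r) + g * r) * \<delta>"
  shows "M \<le> (C * (2 * s + 15 * g * r) + g * r) * \<delta>"
proof -
  have gr: "g * r > 0" using assms by simp
  have "3 * (g * r) < s" using assms(5) by (simp add: mult.assoc)
  then have rg: "r - g * r > 0" using assms(3) gr by linarith
  have a1: "(s + g * r) * (2 * r + g * r) \<le> (2 * s + 15 * g * r) * (r - g * r)"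
    by (rule arith1) (use assms in auto)
  have "(s + g * r) / (r - g * r) * (2 * r + g * r) = (s + g * r) * (2 * r + g * r) / (r - g * r)"
    by simp
  also have "\<dots> \<le> 2 * s + 15 * g * r" using a1 rg by (simp add: pos_divide_le_eq)
  finally have b: "(s + g * r) / (r - g * r) * (2 * r + g * r) \<le> 2 * s + 15 * g * r" .
  have "(C * ((s + g * r) / (r - g * r))) * (2 * r + g * r) \<le> C * (2 * s + 15 * g * r)"
    using mult_left_mono[OF b assms(6)] by (simp add: mult.assoc)
  then have "((C * ((s + g * r) / (r - g * r))) * (2 * r + g * r) + g * r) * \<delta>
      \<le> (C * (2 * s + 15 * g * r) + g * r) * \<delta>"
    using assms(7) by (intro mult_right_mono) auto
  then show ?thesis using M by linarith
qed

theorem lemma4p2: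
  fixes \<mu> \<nu> :: "complex measure" and \<phi> :: "real \<Rightarrow> real"
    and \<gamma> r s :: real and x z :: complex
  assumes "cutoff \<phi>"
    and "loc_finite_borel \<mu>" and "loc_finite_borel \<nu>"
    and "\<gamma> > 0" and "r > 0" and "0 < s" and "s \<le> r"
    and "ball z s \<subseteq> ball x (3 * r)"
    and "x \<in> msupp \<nu>"
    and "alpha \<phi> \<mu> \<nu> x r \<le> \<gamma> * dens \<mu> x r"
  shows "(\<gamma> < (s / r)\<^sup>2 / 9 \<longrightarrow>
           (Dratio \<nu> \<noteq> \<infinity> \<longrightarrow>
              dens \<mu> z s \<le> 3 * real_of_ereal (Dratio \<nu>) * (1 + 8 * sqrt \<gamma> * (r / s)) * dens \<mu> x r)
         \<and> (line_measure \<nu> \<longrightarrow> dens \<mu> z s \<le> (1 + 8 * sqrt \<gamma> * (r / s)) * dens \<mu> x r))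
       \<and> (Dratio \<nu> \<noteq> \<infinity> \<and> \<gamma> < (s / r)\<^sup>2 / (9 * real_of_ereal (Dratio \<nu>)) \<and>
           z \<in> msupp \<nu> \<longrightarrow>
           dens \<mu> z s \<ge> (1 / real_of_ereal (Dratio \<nu>)) *
             (1 - 8 * sqrt (real_of_ereal (Dratio \<nu>) * \<gamma>) * (r / s)) * dens \<mu> x r)"
proof -
  note A = assms
  define \<delta> where "\<delta> = dens \<mu> x r"
  have d0: "\<delta> \<ge> 0" using A(5) by (simp add: \<delta>_def dens_def)
  have dz: "dens \<mu> z s \<le> F * \<delta>" if "measure \<mu> (ball z s) \<le> (2 * s * F) * \<delta>" for F
  proof -
    have "dens \<mu> z s = measure \<mu> (ball z s) / (2 * s)" by (simp add: dens_def)
    also have "\<dots> \<le> (2 * s * F) * \<delta> / (2 * s)" using that A(6) by (intro divide_right_mono) auto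
    also have "\<dots> = F * \<delta>" using A(6) by simp
    finally show ?thesis .
  qed
  have P1: "\<gamma> < (s / r)\<^sup>2 / 9 \<longrightarrow>
           (Dratio \<nu> \<noteq> \<infinity> \<longrightarrow>
              dens \<mu> z s \<le> 3 * real_of_ereal (Dratio \<nu>) * (1 + 8 * sqrt \<gamma> * (r / s)) * dens \<mu> x r)
         \<and> (line_measure \<nu> \<longrightarrow> dens \<mu> z s \<le> (1 + 8 * sqrt \<gamma> * (r / s)) * dens \<mu> x r)"
  proof
    assume small: "\<gamma> < (s / r)\<^sup>2 / 9"
    define g where "g = sqrt \<gamma>"
    define t where "t = g * r"
    have g0: "g > 0" using A(4) by (simp add: g_def)
    have g3: "3 * g * r < s" unfolding g_def by (rule sqrt_small) (use A small in auto)
    have g3': "3 * (g * r) < s" using g3 by (simp add: mult.assoc)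
    have t0: "t > 0" using g0 A(5) by (simp add: t_def)
    have rt: "r - t > 0" using g3' A(7) t0 unfolding t_def by linarith
    have Nx0: "measure \<nu> (ball x (r - t)) \<ge> 0" by simp
    have core: "measure \<mu> (ball z s) \<le> (K * (2 * r + g * r) + g * r) * \<delta>"
      if "K \<ge> 0" "measure \<nu> (ball z (s + t)) \<le> K * measure \<nu> (ball x (r - t))" for K
      using part1_core[OF A(1-8) A(10) small that(1)] that(2) unfolding g_def t_def \<delta>_def by simp
    show "(Dratio \<nu> \<noteq> \<infinity> \<longrightarrow>
              dens \<mu> z s \<le> 3 * real_of_ereal (Dratio \<nu>) * (1 + 8 * sqrt \<gamma> * (r / s)) * dens \<mu> x r)
         \<and> (line_measure \<nu> \<longrightarrow> dens \<mu> z s \<le> (1 + 8 * sqrt \<gamma> * (r / s)) * dens \<mu> x r)"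
    proof (intro conjI impI)
      assume fin: "Dratio \<nu> \<noteq> \<infinity>"
      define D where "D = real_of_ereal (Dratio \<nu>)"
      have D1: "D \<ge> 1" unfolding D_def by (rule Dratio_facts(1)[OF A(3,9) fin])
      define K where "K = 2 * D * ((s + t) / (r - t))"
      have K0: "K \<ge> 0" using D1 t0 rt A(6) by (simp add: K_def)
      have KN: "measure \<nu> (ball z (s + t)) \<le> K * measure \<nu> (ball x (r - t))"
      proof (cases "measure \<nu> (ball z (s + t)) > 0")
        case True
        then obtain z' where z': "z' \<in> msupp \<nu>" "z' \<in> ball z (s + t)"
          using pos_supp[OF A(3)] by blast
        have sub2: "ball z (s + t) \<subseteq> ball z' (2 * (s + t))"
          using z'(2) by (simp add: ball_subset_ball_iff dist_commute)
        have "measure \<nu> (ball z (s + t)) \<le> measure \<nu> (ball z' (2 * (s + t)))"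
        proof (rule measure_mono_fmeasurable[OF sub2])
          show "ball z (s + t) \<in> sets \<nu>" using lfb_sets[OF A(3)] by simp
          show "ball z' (2 * (s + t)) \<in> fmeasurable \<nu>"
            using lfb_sets[OF A(3)] lfb_ball_fin[OF A(3)] by (intro fmeasurableI) auto
        qed
        moreover have "dens \<nu> z' (2 * (s + t)) \<le> D * dens \<nu> x (r - t)"
          unfolding D_def by (rule Dratio_facts(2)[OF A(3,9) fin z'(1) A(9)]) (use t0 A(6) rt in auto)
        then have "measure \<nu> (ball z' (2 * (s + t))) / (2 * (2 * (s + t)))
            \<le> D * (measure \<nu> (ball x (r - t)) / (2 * (r - t)))" by (simp add: dens_def)
        then have "measure \<nu> (ball z' (2 * (s + t)))
            \<le> (2 * (2 * (s + t))) * (D * (measure \<nu> (ball x (r - t)) / (2 * (r - t))))"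
          using t0 A(6) by (simp add: pos_divide_le_eq mult.commute)
        moreover have "(2 * (2 * (s + t))) * (D * (measure \<nu> (ball x (r - t)) / (2 * (r - t))))
            = K * measure \<nu> (ball x (r - t))" unfolding K_def using rt by (simp add: field_simps)
        ultimately show ?thesis by linarith
      next
        case False
        then have "measure \<nu> (ball z (s + t)) \<le> 0" by simp
        moreover have "K * measure \<nu> (ball x (r - t)) \<ge> 0" using K0 Nx0 by simp
        ultimately show ?thesis by linarith
      qed
      have M1: "measure \<mu> (ball z s) \<le> (K * (2 * r + g * r) + g * r) * \<delta>" by (rule core[OF K0 KN])
      have M2: "measure \<mu> (ball z s) \<le> ((2 * D) * (2 * s + 15 * g * r) + g * r) * \<delta>"
      proof (rule fin_core[OF A(5,6,7) g0 g3 _ d0])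
        show "0 \<le> 2 * D" using D1 by simp
        show "measure \<mu> (ball z s) \<le> ((2 * D) * ((s + g * r) / (r - g * r)) * (2 * r + g * r) + g * r) * \<delta>"
          using M1 unfolding K_def t_def by (simp add: mult.assoc)
      qed
      have "g * r \<le> D * (g * r)" using D1 g0 A(5) by simp
      moreover have "D * s \<ge> 0" using D1 A(6) by simp
      moreover have "g * r > 0" using g0 A(5) by simp
      ultimately have ineq: "4 * (D * s) + 30 * (D * (g * r)) + g * r \<le> 6 * (D * s) + 48 * (D * (g * r))"
        by linarith
      have e1: "(2 * D) * (2 * s + 15 * g * r) + g * r = 4 * (D * s) + 30 * (D * (g * r)) + g * r"
        by (simp add: algebra_simps)
      have e2: "2 * s * (3 * D * (1 + 8 * g * (r / s))) = 6 * (D * s) + 48 * (D * (g * r))"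
        using A(6) by (simp add: field_simps)
      have "(2 * D) * (2 * s + 15 * g * r) + g * r \<le> 2 * s * (3 * D * (1 + 8 * g * (r / s)))"
        unfolding e1 e2 by (rule ineq)
      then have "measure \<mu> (ball z s) \<le> (2 * s * (3 * D * (1 + 8 * g * (r / s)))) * \<delta>"
        using M2 d0 by (meson mult_right_mono order_trans)
      then have "dens \<mu> z s \<le> (3 * D * (1 + 8 * g * (r / s))) * \<delta>" by (rule dz)
      then show "dens \<mu> z s \<le> 3 * real_of_ereal (Dratio \<nu>) * (1 + 8 * sqrt \<gamma> * (r / s)) * dens \<mu> x r"
        by (simp add: D_def g_def \<delta>_def)
    next
      assume line: "line_measure \<nu>"
      obtain k where k: "k > 0" "\<And>w \<rho>. \<rho> > 0 \<Longrightarrow> measure \<nu> (ball w \<rho>) \<le> 2 * k * \<rho>"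
        "\<And>\<rho>. \<rho> > 0 \<Longrightarrow> measure \<nu> (ball x \<rho>) \<ge> 2 * k * \<rho>"
        using line_facts[OF line A(9)] by blast
      define K where "K = (s + t) / (r - t)"
      have K0: "K \<ge> 0" using t0 rt A(6) by (simp add: K_def)
      have KN: "measure \<nu> (ball z (s + t)) \<le> K * measure \<nu> (ball x (r - t))"
      proof -
        have "measure \<nu> (ball z (s + t)) \<le> 2 * k * (s + t)" using k(2) t0 A(6) by simp
        also have "\<dots> = K * (2 * k * (r - t))" unfolding K_def using rt by simp
        also have "\<dots> \<le> K * measure \<nu> (ball x (r - t))" using k(3)[OF rt] K0 by (rule mult_left_mono)
        finally show ?thesis .
      qed
      have M1: "measure \<mu> (ball z s) \<le> (K * (2 * r + g * r) + g * r) * \<delta>" by (rule core[OF K0 KN])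
      have M2: "measure \<mu> (ball z s) \<le> (1 * (2 * s + 15 * g * r) + g * r) * \<delta>"
      proof (rule fin_core[OF A(5,6,7) g0 g3 _ d0])
        show "measure \<mu> (ball z s) \<le> (1 * ((s + g * r) / (r - g * r)) * (2 * r + g * r) + g * r) * \<delta>"
          using M1 unfolding K_def t_def by simp
      qed simp
      have "1 * (2 * s + 15 * g * r) + g * r = 2 * s * (1 + 8 * g * (r / s))"
        using A(6) by (simp add: algebra_simps)
      then have "measure \<mu> (ball z s) \<le> (2 * s * (1 + 8 * g * (r / s))) * \<delta>"
        using M2 by simp
      then have "dens \<mu> z s \<le> (1 + 8 * g * (r / s)) * \<delta>" by (rule dz)
      then show "dens \<mu> z s \<le> (1 + 8 * sqrt \<gamma> * (r / s)) * dens \<mu> x r"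
        by (simp add: g_def \<delta>_def)
    qed
  qed
  have P2: "Dratio \<nu> \<noteq> \<infinity> \<and> \<gamma> < (s / r)\<^sup>2 / (9 * real_of_ereal (Dratio \<nu>)) \<and>
           z \<in> msupp \<nu> \<longrightarrow>
           dens \<mu> z s \<ge> (1 / real_of_ereal (Dratio \<nu>)) *
             (1 - 8 * sqrt (real_of_ereal (Dratio \<nu>) * \<gamma>) * (r / s)) * dens \<mu> x r"
  proof (intro impI, elim conjE)
    assume fin: "Dratio \<nu> \<noteq> \<infinity>" and small: "\<gamma> < (s / r)\<^sup>2 / (9 * real_of_ereal (Dratio \<nu>))"
      and zs: "z \<in> msupp \<nu>"
    show "dens \<mu> z s \<ge> (1 / real_of_ereal (Dratio \<nu>)) *
             (1 - 8 * sqrt (real_of_ereal (Dratio \<nu>) * \<gamma>) * (r / s)) * dens \<mu> x r"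
    proof (rule part2_core[OF A(1-8) A(10) Dratio_facts(1)[OF A(3,9) fin] small])
      fix t :: real assume "0 < t" "t < s"
      then show "dens \<nu> x (r + t) \<le> real_of_ereal (Dratio \<nu>) * dens \<nu> z (s - t)"
        using A(5) by (intro Dratio_facts(2)[OF A(3,9) fin A(9) zs]) auto
    qed
  qed
  show ?thesis by (rule conjI[OF P1 P2])
qed

end
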